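(* Assume that $\sigma>0$ and $d>0$. Let $\zeta(\tau):=\frac{K}{b_e(T-\tau)}-1$ for $\tau\in(0,T]$. Then $\displaystyle\lim_{\tau\to0^+}\frac{\zeta(\tau)}{\sqrt\tau}=\infty$.
   Context: Let $(\Omega,\mathscr{F},\mathbb{F},\mathbb{P})$ be a complete filtered probability space. Fix $r\ge0$, $\delta\ge0$, $K>0$, $T>0$. Let $X$ be a Lévy process with Lévy triplet $(b,\sigma^2,\nu)$ such that: (i) $\sigma\neq0$, or $\nu((-\infty,0))>0$, or $\int_{(0,1]}z\,\nu(dz)=\infty$; (ii) $\sigma\neq0$, or $\nu((0,\infty))>0$, or $\int_{[-1,0)}|z|\,\nu(dz)=\infty$; (iii) $\int_1^\infty e^z\nu(dz)<\infty$ and $b=-\frac{\sigma^2}{2}-\int_{\mathbb{R}\setminus\{0\}}(e^z-1-z\mathbf 1_{\{|z|\le1\}})\nu(dz)$. The European put price is $P_e(t,s)=\mathbb{E}\big(e^{-r(T-t)}(K-se^{(r-\delta)(T-t)+X_{T-t}})^+\big)$ and $b_e(t)=\inf\{s\ge0:P_e(t,s)>(K-s)^+\}$. Define $d:=r-\delta-\int_{(0,\infty)}(e^z-1)\nu(dz)$. *)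

theory Defs
  imports "HOL-Probability.Probability"
begin

definition levy_measure :: "real measure \<Rightarrow> bool" where
  "levy_measure \<nu> \<longleftrightarrow> sets \<nu> = sets borel \<and> emeasure \<nu> {0} = 0 \<and>
     (\<integral>\<^sup>+ z. ennreal (min 1 (z\<^sup>2)) \<partial>\<nu>) < \<infinity>"

definition levy_exponent :: "real \<Rightarrow> real \<Rightarrow> real measure \<Rightarrow> real \<Rightarrow> complex" where
  "levy_exponent b \<sigma> \<nu> u =
     \<i> * complex_of_real (b * u) - complex_of_real (\<sigma>\<^sup>2 * u\<^sup>2 / 2)
     + (CLINT z|\<nu>. exp (\<i> * complex_of_real (u * z)) - 1
                     - \<i> * complex_of_real (u * z * indicator {-1..1} z))"

definition levy_process :: "'a measure \<Rightarrow> (real \<Rightarrow> 'a \<Rightarrow> real) \<Rightarrow> bool" where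
  "levy_process M X \<longleftrightarrow>
     prob_space M \<and>
     (\<forall>t\<ge>0. X t \<in> borel_measurable M) \<and>
     (\<forall>\<omega>\<in>space M. X 0 \<omega> = 0) \<and>
     (\<forall>(n::nat) (t::nat \<Rightarrow> real). 0 \<le> t 0 \<and> (\<forall>i<n. t i \<le> t (Suc i)) \<longrightarrow>
        prob_space.indep_vars M (\<lambda>_. borel) (\<lambda>i \<omega>. X (t (Suc i)) \<omega> - X (t i) \<omega>) {..<n}) \<and>
     (\<forall>s t. 0 \<le> s \<and> s \<le> t \<longrightarrow>
        distr M borel (\<lambda>\<omega>. X t \<omega> - X s \<omega>) = distr M borel (X (t - s))) \<and>
     (\<forall>t\<ge>0. \<forall>\<epsilon>>0. ((\<lambda>s. measure M {\<omega>\<in>space M. \<bar>X s \<omega> - X t \<omega>\<bar> > \<epsilon>}) \<longlongrightarrow> 0)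
                      (at t within {0..})) \<and>
     (AE \<omega> in M. \<forall>t\<ge>0. continuous (at_right t) (\<lambda>s. X s \<omega>) \<and>
                         (t > 0 \<longrightarrow> (\<exists>l. ((\<lambda>s. X s \<omega>) \<longlongrightarrow> l) (at_left t))))"

definition levy_process_triplet ::
    "'a measure \<Rightarrow> (real \<Rightarrow> 'a \<Rightarrow> real) \<Rightarrow> real \<Rightarrow> real \<Rightarrow> real measure \<Rightarrow> bool" where
  "levy_process_triplet M X b \<sigma> \<nu> \<longleftrightarrow>
     levy_process M X \<and> levy_measure \<nu> \<and>
     (\<forall>t\<ge>0. \<forall>u. char (distr M borel (X t)) u = exp (complex_of_real t * levy_exponent b \<sigma> \<nu> u))"

definition put_price ::
    "'a measure \<Rightarrow> (real \<Rightarrow> 'a \<Rightarrow> real) \<Rightarrow> real \<Rightarrow> real \<Rightarrow> real \<Rightarrow> real \<Rightarrow> real \<Rightarrow> real \<Rightarrow> real" where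
  "put_price M X r \<delta> K T t s =
     (\<integral>\<omega>. exp (- r * (T - t)) * max 0 (K - s * exp ((r - \<delta>) * (T - t) + X (T - t) \<omega>)) \<partial>M)"

definition put_boundary ::
    "'a measure \<Rightarrow> (real \<Rightarrow> 'a \<Rightarrow> real) \<Rightarrow> real \<Rightarrow> real \<Rightarrow> real \<Rightarrow> real \<Rightarrow> real \<Rightarrow> real" where
  "put_boundary M X r \<delta> K T t = Inf {s. 0 \<le> s \<and> put_price M X r \<delta> K T t s > max 0 (K - s)}"

text \<open>d = r - delta - int_{(0,oo)} (e^z - 1) nu(dz), as an extended real
  (the integrand is nonnegative; d = -oo if the integral diverges).\<close>
definition levy_d :: "real \<Rightarrow> real \<Rightarrow> real measure \<Rightarrow> ereal" where
  "levy_d r \<delta> \<nu> = ereal (r - \<delta>) - enn2ereal (\<integral>\<^sup>+ z. ennreal (exp z - 1) * indicator {0<..} z \<partial>\<nu>)"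

end

theory Submission
  imports Defs
begin


lemma exp_le_quad:
  fixes x :: real assumes "\<bar>x\<bar> \<le> 1" shows "exp x \<le> 1 + x + x\<^sup>2"
proof (cases "x \<ge> 0")
  case True then show ?thesis using exp_bound[of x] assms by auto
next
  case False
  have "1 - x \<le> exp (-x)" using exp_ge_add_one_self[of "-x"] by simp
  hence "exp x \<le> 1 / (1 - x)" using False by (simp add: exp_minus field_simps)
  also have "\<dots> \<le> 1 + x + x\<^sup>2"
  proof -
    have x3: "x * (x * x) \<le> 0" using False by (intro mult_nonpos_nonneg) auto
    have "(1 - x) * (1 + x + x\<^sup>2) = 1 - x * (x * x)" by (simp add: algebra_simps power2_eq_square)
    hence "1 \<le> (1 - x) * (1 + x + x\<^sup>2)" using x3 by simp
    thus ?thesis using False by (simp add: field_simps)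
  qed
  finally show ?thesis .
qed

lemma key_ineq:
  fixes a c \<epsilon> :: real
  assumes c: "c > 0" and e: "\<epsilon> > 0"
  shows "\<exists>t0>0. \<forall>t y. 0 < t \<and> t < t0 \<longrightarrow>
     t * (min (3*c) (max 0 (c - y)) - \<epsilon>) \<le> max 0 (1 - (1 - c*t) * exp (a*t\<^sup>2 + t*y))"
proof -
  define B where "B = \<bar>a\<bar> + 3*c"
  define L where "L = \<bar>a\<bar> + B\<^sup>2 + c*B + 1"
  have B: "B > 0" using c by (simp add: B_def)
  have cB: "c*B > 0" using B c by simp
  have L: "L > 0" unfolding L_def using cB by (smt (verit) zero_le_power2 abs_ge_zero)
  define t0 where "t0 = min (1/c) (min 1 (min (1/B) (\<epsilon>/L)))"
  have t0: "t0 > 0" using c B L e by (simp add: t0_def)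
  have main: "t * (c - y - \<epsilon>) \<le> 1 - (1 - c*t) * exp (a*t\<^sup>2 + t*y)"
    if t: "0 < t" "t < t0" and y: "-2*c \<le> y" "y \<le> c" for t y
  proof -
    define x where "x = a*t\<^sup>2 + t*y"
    have t1: "t \<le> 1" "c*t \<le> 1" "t*B \<le> 1" "t*L \<le> \<epsilon>"
      using t c B L unfolding t0_def by (auto simp: field_simps)
    have ay: "\<bar>y\<bar> \<le> 3*c" using y c by auto
    have "\<bar>a*t\<^sup>2\<bar> \<le> \<bar>a\<bar>*t"
      using t t1 by (simp add: abs_mult power2_eq_square mult_left_mono mult_le_cancel_left1)
    moreover have "\<bar>t*y\<bar> \<le> t*(3*c)" using t ay by (simp add: abs_mult mult_left_mono)
    ultimately have xb: "\<bar>x\<bar> \<le> t*B" unfolding x_def B_def by (simp add: algebra_simps)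
    hence x1: "\<bar>x\<bar> \<le> 1" using t1 by linarith
    have ct: "0 \<le> 1 - c*t" using t1 by simp
    have "(1 - c*t) * exp x \<le> (1 - c*t) * (1 + x + x\<^sup>2)"
      using exp_le_quad[OF x1] ct by (rule mult_left_mono)
    moreover have "x\<^sup>2 \<le> (t*B)\<^sup>2" using xb by (metis abs_ge_zero power2_abs power_mono)
    moreover have "c*t*x \<ge> - (c*t*(t*B))"
    proof -
      have "-(t*B) \<le> x" using xb by linarith
      hence "c*t*(-(t*B)) \<le> c*t*x" using c t by (intro mult_left_mono) auto
      thus ?thesis by simp
    qed
    moreover have "c*t*x\<^sup>2 \<ge> 0" using c t by simp
    moreover have "a*t\<^sup>2 \<le> \<bar>a\<bar>*t\<^sup>2" by (simp add: mult_right_mono)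
    moreover have "t\<^sup>2 * L \<le> t * \<epsilon>" using t1 t by (simp add: power2_eq_square mult_left_mono mult.assoc[symmetric])
    moreover have "1 - (1-c*t)*(1+x+x\<^sup>2) = c*t - x - x\<^sup>2 + c*t*x + c*t*x\<^sup>2"
      by (simp add: algebra_simps)
    moreover have "t\<^sup>2*L = \<bar>a\<bar>*t\<^sup>2 + (t*B)\<^sup>2 + c*t*(t*B) + t\<^sup>2"
      by (simp add: L_def algebra_simps power2_eq_square)
    moreover have "t*(c-y-\<epsilon>) = c*t - t*y - t*\<epsilon>" by (simp add: algebra_simps)
    moreover have "x = a*t\<^sup>2 + t*y" by (simp add: x_def)
    moreover have "t\<^sup>2 \<ge> 0" by simp
    ultimately have "t * (c - y - \<epsilon>) \<le> 1 - (1 - c * t) * exp x" by linarith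
    thus ?thesis by (simp add: x_def)
  qed
  show ?thesis
  proof (intro exI[of _ t0] conjI allI impI t0)
    fix t y :: real assume t: "0 < t \<and> t < t0"
    show "t * (min (3*c) (max 0 (c - y)) - \<epsilon>) \<le> max 0 (1 - (1 - c*t) * exp (a*t\<^sup>2 + t*y))"
    proof (cases "c \<le> y")
      case True
      then have "t * (min (3*c) (max 0 (c - y)) - \<epsilon>) \<le> 0" using t e c by (simp add: mult_nonneg_nonneg)
      thus ?thesis by linarith
    next
      case False
      show ?thesis
      proof (cases "-2*c \<le> y")
        case True
        with main[of t y] t False c show ?thesis by auto
      next
        case F2: False
        have ct: "0 \<le> 1 - c*t" using t c unfolding t0_def by (auto simp: field_simps)
        have "t*y \<le> t*(-2*c)" using F2 t by (intro mult_left_mono) auto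
        hence "exp (a*t\<^sup>2 + t*y) \<le> exp (a*t\<^sup>2 + t*(-2*c))" by simp
        hence "(1 - c*t) * exp (a*t\<^sup>2 + t*y) \<le> (1 - c*t) * exp (a*t\<^sup>2 + t*(-2*c))"
          using ct by (rule mult_left_mono)
        moreover have "t * (c - (-2*c) - \<epsilon>) \<le> 1 - (1 - c*t) * exp (a*t\<^sup>2 + t*(-2*c))"
          using main[of t "-2*c"] t c by auto
        moreover have "min (3*c) (max 0 (c - y)) = 3*c" using F2 by auto
        ultimately show ?thesis by (simp add: algebra_simps)
      qed
    qed
  qed
qed



lemma sym_pt:
  fixes c y :: real assumes "c > 0"
  shows "min (3*c) (max 0 (c - y)) + min (3*c) (max 0 (c + y)) \<ge> 2*c + c * indicator {2*c..} y"
  using assms by (auto simp: min_def max_def indicator_def)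

lemma gauss_G:
  fixes c \<sigma> :: real assumes c: "c > 0" and s: "\<sigma> > 0"
  shows "c < (\<integral>x. min (3*c) (max 0 (c - \<sigma>*x)) \<partial>std_normal_distribution)"
proof -
  interpret N: real_distribution std_normal_distribution by (rule real_dist_normal_dist)
  define g where "g = (\<lambda>x::real. min (3*c) (max 0 (c - \<sigma>*x)))"
  have gm[measurable]: "g \<in> borel_measurable borel" unfolding g_def by measurable
  have gb: "\<And>x. norm (g x) \<le> 3*c" unfolding g_def using c by auto
  have gi: "integrable std_normal_distribution g"
    by (rule N.integrable_const_bound[where B="3*c"]) (use gb in auto)
  have gi': "integrable std_normal_distribution (\<lambda>x. g (-x))"
    by (rule N.integrable_const_bound[where B="3*c"]) (use gb in auto)
  define S where "S = {2*c/\<sigma>..2*c/\<sigma>+1}"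
  have Si: "integrable std_normal_distribution (\<lambda>x. c * indicator S x :: real)"
    by (rule N.integrable_const_bound[where B="c"]) (use c in \<open>auto simp: S_def indicator_def\<close>)
  have sym: "(\<integral>x. g (-x) \<partial>std_normal_distribution) = (\<integral>x. g x \<partial>std_normal_distribution)"
  proof -
    have "(\<integral>x. g (-x) \<partial>std_normal_distribution) = (\<integral>x. std_normal_density x * g (-x) \<partial>lborel)"
      by (subst integral_density) auto
    also have "\<dots> = (\<integral>x. std_normal_density x * g x \<partial>lborel)"
      by (subst lborel_integral_real_affine[where c="-1" and t=0]) (auto simp: std_normal_density_def)
    also have "\<dots> = (\<integral>x. g x \<partial>std_normal_distribution)"
      by (subst integral_density) auto
    finally show ?thesis .
  qed
  have pt: "\<And>x. 2*c + c * indicator S x \<le> g x + g (-x)"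
  proof -
    fix x :: real
    have "indicator S x \<le> (indicator {2*c..} (\<sigma>*x) :: real)"
      using s by (auto simp: S_def indicator_def field_simps)
    hence "c * indicator S x \<le> c * (indicator {2*c..} (\<sigma>*x) :: real)"
      using c by (intro mult_left_mono) auto
    thus "2*c + c * indicator S x \<le> g x + g (-x)"
      using sym_pt[OF c, of "\<sigma>*x"] unfolding g_def by simp
  qed
  have pos: "0 < (\<integral>x. c * indicator S x \<partial>std_normal_distribution)"
  proof -
    define m where "m = (1 / sqrt (2 * pi)) * exp (- (2*c/\<sigma>+1)\<^sup>2 / 2)"
    have m: "m > 0" by (simp add: m_def)
    have "(\<integral>x. indicator S x \<partial>std_normal_distribution) = (\<integral>x. std_normal_density x * indicator S x \<partial>lborel)"
      by (subst integral_density) (auto simp: S_def)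
    also have "\<dots> \<ge> (\<integral>x. m * indicator S x \<partial>lborel)"
    proof (rule integral_mono)
      show "integrable lborel (\<lambda>x. m * indicator S x)" by (simp add: S_def)
      have "integrable std_normal_distribution (indicator S :: real \<Rightarrow> real)"
        by (rule N.integrable_const_bound[where B=1]) (auto simp: S_def indicator_def)
      thus "integrable lborel (\<lambda>x. std_normal_density x * indicator S x)"
        by (subst (asm) integrable_density) (auto simp: S_def)
      fix x
      show "m * indicator S x \<le> std_normal_density x * indicator S x"
      proof (cases "x \<in> S")
        case True
        have "0 \<le> 2*c/\<sigma>" using c s by simp
        hence "0 \<le> x" using True by (auto simp: S_def)
        hence "x\<^sup>2 \<le> (2*c/\<sigma>+1)\<^sup>2" using True by (intro power_mono) (auto simp: S_def)
        hence "exp (- ((2*c/\<sigma>+1)\<^sup>2 / 2)) \<le> exp (- (x\<^sup>2 / 2))" by simp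
        hence "m \<le> std_normal_density x" unfolding m_def std_normal_density_def
          by (intro mult_left_mono) auto
        thus ?thesis using True by simp
      qed simp
    qed
    finally have "(\<integral>x. m * indicator S x \<partial>lborel) \<le> (\<integral>x. indicator S x \<partial>std_normal_distribution)" .
    moreover have "(\<integral>x. m * indicator S x \<partial>lborel) = m" using c s by (simp add: S_def)
    ultimately show ?thesis using c m by simp
  qed
  have "2*c + (\<integral>x. c * indicator S x \<partial>std_normal_distribution)
      = (\<integral>x. 2*c + c * indicator S x \<partial>std_normal_distribution)"
    using Si N.prob_space by simp
  also have "\<dots> \<le> (\<integral>x. g x + g (-x) \<partial>std_normal_distribution)"
    by (rule integral_mono) (use Si gi gi' pt in auto)
  also have "\<dots> = 2 * (\<integral>x. g x \<partial>std_normal_distribution)"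
    using gi gi' sym by simp
  finally show ?thesis using pos unfolding g_def by simp
qed



lemma iexp_bd0: "cmod (exp (\<i> * complex_of_real x) - 1) \<le> 2"
  using iexp_approx2[of x 0] by simp

lemma iexp_bd1: "cmod (exp (\<i> * complex_of_real x) - 1 - \<i> * complex_of_real x) \<le> x\<^sup>2 / 2"
  using iexp_approx1[of x 1] by (simp add: power2_eq_square diff_diff_eq)

lemma levy_term_to0:
  fixes t v :: "nat \<Rightarrow> real"
  assumes lm: "levy_measure \<nu>" and t: "\<And>n. 0 < t n" "\<And>n. t n \<le> 1" "t \<longlonglongrightarrow> 0"
    and tv: "\<And>n. t n * (v n)\<^sup>2 = C"
  shows "(\<lambda>n. complex_of_real (t n) * (CLINT z|\<nu>. exp (\<i> * complex_of_real (v n * z)) - 1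
            - \<i> * complex_of_real (v n * z * indicator {-1..1} z))) \<longlonglongrightarrow> 0"
proof -
  have sets: "sets \<nu> = sets borel" and fin: "(\<integral>\<^sup>+ z. ennreal (min 1 (z\<^sup>2)) \<partial>\<nu>) < \<infinity>"
    using lm by (auto simp: levy_measure_def)
  have meq: "borel_measurable \<nu> = borel_measurable borel"
    by (rule measurable_cong_sets[OF sets refl])
  have C0: "C \<ge> 0" using tv[of 0] t(1)[of 0] by (metis zero_le_power2 mult_nonneg_nonneg less_eq_real_def)
  define f where "f n z = complex_of_real (t n) * (exp (\<i> * complex_of_real (v n * z)) - 1
            - \<i> * complex_of_real (v n * z * indicator {-1..1} z))" for n z
  define w where "w z = (C/2 + 2) * min 1 (z\<^sup>2)" for z :: real
  have fm: "f n \<in> borel_measurable \<nu>" for n unfolding meq f_def by measurable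
  have wi0: "integrable \<nu> (\<lambda>z. min 1 (z\<^sup>2) :: real)"
  proof (rule integrableI_bounded)
    show "(\<lambda>z. min 1 (z\<^sup>2) :: real) \<in> borel_measurable \<nu>" unfolding meq by measurable
    show "(\<integral>\<^sup>+ z. ennreal (norm (min 1 (z\<^sup>2) :: real)) \<partial>\<nu>) < \<infinity>" using fin by simp
  qed
  have wi: "integrable \<nu> w" unfolding w_def using wi0 by simp
  have lim: "(\<lambda>n. f n z) \<longlonglongrightarrow> 0" for z
  proof (rule Lim_null_comparison)
    have "norm (f n z) \<le> 2 * t n + sqrt C * \<bar>z\<bar> * sqrt (t n)" for n
    proof -
      have "cmod (exp (\<i> * complex_of_real (v n * z)) - 1 - \<i> * complex_of_real (v n * z * indicator {-1..1} z))
          \<le> cmod (exp (\<i> * complex_of_real (v n * z)) - 1) + cmod (\<i> * complex_of_real (v n * z * indicator {-1..1} z))"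
        by (rule norm_triangle_ineq4)
      also have "\<dots> \<le> 2 + \<bar>v n\<bar> * \<bar>z\<bar>"
      proof -
        have "cmod (\<i> * complex_of_real (v n * z * indicator {-1..1} z)) \<le> \<bar>v n\<bar> * \<bar>z\<bar>"
          by (simp add: norm_mult abs_mult indicator_def)
        thus ?thesis using iexp_bd0[of "v n * z"] by simp
      qed
      finally have a: "cmod (exp (\<i> * complex_of_real (v n * z)) - 1 - \<i> * complex_of_real (v n * z * indicator {-1..1} z)) \<le> 2 + \<bar>v n\<bar> * \<bar>z\<bar>" .
      have "t n * \<bar>v n\<bar> = sqrt C * sqrt (t n)"
      proof -
        have "t n * \<bar>v n\<bar> = sqrt ((t n * \<bar>v n\<bar>)\<^sup>2)" using t(1)[of n] by simp
        also have "(t n * \<bar>v n\<bar>)\<^sup>2 = C * t n" using tv[of n] by (simp add: power2_eq_square algebra_simps)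
        finally show ?thesis by (simp add: real_sqrt_mult)
      qed
      hence "t n * (2 + \<bar>v n\<bar> * \<bar>z\<bar>) = 2 * t n + sqrt C * \<bar>z\<bar> * sqrt (t n)"
        by (simp add: algebra_simps)
      moreover have "norm (f n z) = t n * cmod (exp (\<i> * complex_of_real (v n * z)) - 1 - \<i> * complex_of_real (v n * z * indicator {-1..1} z))"
        unfolding f_def using t(1)[of n] by (simp add: norm_mult)
      ultimately show ?thesis using a t(1)[of n] by (metis mult_left_mono less_eq_real_def)
    qed
    thus "\<forall>\<^sub>F n in sequentially. norm (f n z) \<le> 2 * t n + sqrt C * \<bar>z\<bar> * sqrt (t n)" by simp
    show "(\<lambda>n. 2 * t n + sqrt C * \<bar>z\<bar> * sqrt (t n)) \<longlonglongrightarrow> 0"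
      using t(3) by (auto intro!: tendsto_eq_intros)
  qed
  have bound: "norm (f n z) \<le> w z" for n z
  proof (cases "\<bar>z\<bar> \<le> 1")
    case True
    hence "norm (f n z) = t n * cmod (exp (\<i> * complex_of_real (v n * z)) - 1 - \<i> * complex_of_real (v n * z))"
      unfolding f_def using t(1)[of n] by (simp add: norm_mult indicator_def abs_le_iff)
    also have "\<dots> \<le> t n * ((v n * z)\<^sup>2 / 2)"
      using iexp_bd1[of "v n * z"] t(1)[of n] by (intro mult_left_mono) auto
    also have "\<dots> = C * z\<^sup>2 / 2" using tv[of n] by (simp add: power_mult_distrib algebra_simps)
    also have "\<dots> \<le> w z"
    proof -
      have "z\<^sup>2 \<le> 1" using True by (simp add: abs_le_square_iff[of z 1, symmetric] abs_square_le_1)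
      hence "min 1 (z\<^sup>2) = z\<^sup>2" by simp
      thus ?thesis unfolding w_def using C0 by (simp add: algebra_simps)
    qed
    finally show ?thesis .
  next
    case False
    hence nz: "indicator {-1..1} z = (0::real)" by (auto simp: indicator_def)
    hence "norm (f n z) = t n * cmod (exp (\<i> * complex_of_real (v n * z)) - 1)"
      unfolding f_def using t(1)[of n] by (simp add: norm_mult)
    also have "\<dots> \<le> 1 * 2" using iexp_bd0[of "v n * z"] t(1)[of n] t(2)[of n] by (intro mult_mono) auto
    also have "\<dots> \<le> w z"
    proof -
      have "1 \<le> z\<^sup>2" using False by (metis abs_le_square_iff abs_one less_eq_real_def not_le one_power2)
      hence "min 1 (z\<^sup>2) = 1" by simp
      thus ?thesis unfolding w_def using C0 by simp
    qed
    finally show ?thesis .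
  qed
  have "(\<lambda>n. integral\<^sup>L \<nu> (f n)) \<longlonglongrightarrow> integral\<^sup>L \<nu> (\<lambda>z. 0)"
    by (rule integral_dominated_convergence[where w=w]) (use fm wi lim bound in auto)
  moreover have "integral\<^sup>L \<nu> (f n) = complex_of_real (t n) * (CLINT z|\<nu>. exp (\<i> * complex_of_real (v n * z)) - 1
            - \<i> * complex_of_real (v n * z * indicator {-1..1} z))" for n
    unfolding f_def by (rule integral_mult_right_zero)
  ultimately show ?thesis by simp
qed



lemma char_distr_div:
  assumes "prob_space M" and Ym: "Y \<in> borel_measurable M"
  shows "char (distr M borel (\<lambda>\<omega>. Y \<omega> / k)) u = char (distr M borel Y) (u / k)"
proof -
  have "char (distr M borel (\<lambda>\<omega>. Y \<omega> / k)) u = (CLINT \<omega>|M. iexp (u * (Y \<omega> / k)))"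
    unfolding char_def by (subst integral_distr) (use Ym in auto)
  also have "\<dots> = (CLINT \<omega>|M. iexp (u / k * Y \<omega>))" by (simp add: field_simps)
  also have "\<dots> = char (distr M borel Y) (u / k)"
    unfolding char_def by (subst integral_distr) (use Ym in auto)
  finally show ?thesis .
qed

lemma weak_conv_levy:
  fixes M :: "'a measure" and X :: "real \<Rightarrow> 'a \<Rightarrow> real"
  assumes levy: "levy_process_triplet M X b \<sigma> \<nu>" and s: "\<sigma> > 0"
    and S: "\<And>n. 0 < S n" "\<And>n. S n < 1" "S \<longlonglongrightarrow> 0"
  shows "weak_conv_m (\<lambda>n. distr M borel (\<lambda>\<omega>. X (S n) \<omega> / (\<sigma> * sqrt (S n)))) std_normal_distribution"
proof -
  have lp: "levy_process M X" and lm: "levy_measure \<nu>"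
    and ch: "\<And>t u. t \<ge> 0 \<Longrightarrow> char (distr M borel (X t)) u = exp (complex_of_real t * levy_exponent b \<sigma> \<nu> u)"
    using levy by (auto simp: levy_process_triplet_def)
  have P: "prob_space M" and Xm: "\<And>t. t \<ge> 0 \<Longrightarrow> X t \<in> borel_measurable M"
    using lp by (auto simp: levy_process_def)
  interpret P: prob_space M by (rule P)
  show ?thesis
  proof (rule levy_continuity)
    fix n
    show "real_distribution (distr M borel (\<lambda>\<omega>. X (S n) \<omega> / (\<sigma> * sqrt (S n))))"
      using Xm[of "S n"] S(1)[of n] by (intro P.real_distribution_distr) auto
  next
    show "real_distribution std_normal_distribution" by (rule real_dist_normal_dist)
  next
    fix u :: real
    define v where "v n = u / (\<sigma> * sqrt (S n))" for n
    have sq: "sqrt (S n) * sqrt (S n) = S n" for n using S(1)[of n] by simp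
    have sqp: "sqrt (S n) > 0" for n using S(1)[of n] by simp
    have e1: "S n * (v n)\<^sup>2 = u\<^sup>2 / \<sigma>\<^sup>2" for n
    proof -
      have "S n * (v n)\<^sup>2 = u\<^sup>2 * (S n / (sqrt (S n) * sqrt (S n))) / \<sigma>\<^sup>2"
        unfolding v_def by (simp add: power2_eq_square field_simps)
      thus ?thesis using sq[of n] sqp[of n] by simp
    qed
    have e2: "S n * (b * v n) = b * u * sqrt (S n) / \<sigma>" for n
    proof -
      have "S n * (b * v n) = b * u * (S n / sqrt (S n)) / \<sigma>"
        unfolding v_def using sqp[of n] s by (simp add: field_simps)
      thus ?thesis using S(1)[of n] by (simp add: real_div_sqrt)
    qed
    have e3: "S n * (\<sigma>\<^sup>2 * (v n)\<^sup>2 / 2) = u\<^sup>2 / 2" for n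
      using e1[of n] s by (simp add: field_simps)
    define I where "I n = (CLINT z|\<nu>. exp (\<i> * complex_of_real (v n * z)) - 1
            - \<i> * complex_of_real (v n * z * indicator {-1..1} z))" for n
    have I0: "(\<lambda>n. complex_of_real (S n) * I n) \<longlonglongrightarrow> 0"
      unfolding I_def
      by (rule levy_term_to0[OF lm, where C="u\<^sup>2 / \<sigma>\<^sup>2"]) (use S e1 in \<open>auto intro: less_imp_le\<close>)
    have L: "complex_of_real (S n) * levy_exponent b \<sigma> \<nu> (v n)
        = \<i> * complex_of_real (b * u * sqrt (S n) / \<sigma>) - complex_of_real (u\<^sup>2 / 2) + complex_of_real (S n) * I n" for n
    proof -
      have "complex_of_real (S n) * levy_exponent b \<sigma> \<nu> (v n)
         = \<i> * complex_of_real (S n * (b * v n)) - complex_of_real (S n * (\<sigma>\<^sup>2 * (v n)\<^sup>2 / 2)) + complex_of_real (S n) * I n"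
        unfolding levy_exponent_def I_def by (simp add: algebra_simps)
      thus ?thesis by (simp only: e2 e3)
    qed
    have "(\<lambda>n. \<i> * complex_of_real (b * u * sqrt (S n) / \<sigma>) - complex_of_real (u\<^sup>2 / 2) + complex_of_real (S n) * I n)
        \<longlonglongrightarrow> \<i> * complex_of_real (b * u * sqrt 0 / \<sigma>) - complex_of_real (u\<^sup>2 / 2) + 0"
      using s by (intro tendsto_intros I0 S(3)) auto
    hence "(\<lambda>n. complex_of_real (S n) * levy_exponent b \<sigma> \<nu> (v n)) \<longlonglongrightarrow> - complex_of_real (u\<^sup>2 / 2)"
      unfolding L by simp
    hence "(\<lambda>n. exp (complex_of_real (S n) * levy_exponent b \<sigma> \<nu> (v n))) \<longlonglongrightarrow> exp (- complex_of_real (u\<^sup>2 / 2))"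
      by (rule tendsto_exp)
    moreover have "char (distr M borel (\<lambda>\<omega>. X (S n) \<omega> / (\<sigma> * sqrt (S n)))) u
        = exp (complex_of_real (S n) * levy_exponent b \<sigma> \<nu> (v n))" for n
      unfolding v_def using S(1)[of n]
      by (subst char_distr_div[OF P Xm]) (auto intro!: ch)
    moreover have "exp (- complex_of_real (u\<^sup>2 / 2)) = char std_normal_distribution u"
      unfolding char_std_normal_distribution by (simp add: exp_of_real[symmetric])
    ultimately show "(\<lambda>n. char (distr M borel (\<lambda>\<omega>. X (S n) \<omega> / (\<sigma> * sqrt (S n)))) u) \<longlonglongrightarrow> char std_normal_distribution u"
      by simp
  qed
qed



theorem lemma4p5:
  fixes M :: "'a measure" and X :: "real \<Rightarrow> 'a \<Rightarrow> real"
    and b \<sigma> r \<delta> K T :: real and \<nu> :: "real measure"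
  assumes levy: "levy_process_triplet M X b \<sigma> \<nu>"
    and r: "r \<ge> 0" and \<delta>: "\<delta> \<ge> 0" and K: "K > 0" and T: "T > 0"
    and cond_i: "\<sigma> \<noteq> 0 \<or> emeasure \<nu> {..<0} > 0
                 \<or> (\<integral>\<^sup>+ z. ennreal z * indicator {0<..1} z \<partial>\<nu>) = \<infinity>"
    and cond_ii: "\<sigma> \<noteq> 0 \<or> emeasure \<nu> {0<..} > 0
                 \<or> (\<integral>\<^sup>+ z. ennreal \<bar>z\<bar> * indicator {-1..<0} z \<partial>\<nu>) = \<infinity>"
    and cond_iii_int: "(\<integral>\<^sup>+ z. ennreal (exp z) * indicator {1..} z \<partial>\<nu>) < \<infinity>"
    and cond_iii_b: "b = - \<sigma>\<^sup>2 / 2 - (\<integral>z. exp z - 1 - z * indicator {-1..1} z \<partial>\<nu>)"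
    and \<sigma>_pos: "\<sigma> > 0"
    and d_pos: "levy_d r \<delta> \<nu> > 0"
  shows "filterlim
           (\<lambda>\<tau>. (K / put_boundary M X r \<delta> K T (T - \<tau>) - 1) / sqrt \<tau>)
           at_top (at_right 0)"
proof -
  have lp: "levy_process M X"
    using levy by (auto simp: levy_process_triplet_def)
  have P: "prob_space M" and Xm: "\<And>t. t \<ge> 0 \<Longrightarrow> X t \<in> borel_measurable M"
    using lp by (auto simp: levy_process_def)
  interpret P: prob_space M by (rule P)
  have rd: "r - \<delta> > 0"
  proof (rule ccontr)
    assume "\<not> r - \<delta> > 0"
    hence "ereal (r - \<delta>) \<le> 0" by simp
    moreover have "enn2ereal (\<integral>\<^sup>+ z. ennreal (exp z - 1) * indicator {0<..} z \<partial>\<nu>) \<ge> 0" by simp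
    ultimately have "levy_d r \<delta> \<nu> \<le> 0" unfolding levy_d_def
      by (cases "enn2ereal (\<integral>\<^sup>+ z. ennreal (exp z - 1) * indicator {0<..} z \<partial>\<nu>)") auto
    thus False using d_pos by simp
  qed
  hence rpos: "r > 0" using \<delta> by simp
  define g0 where "g0 c y = min (3*c) (max 0 (c - y))" for c y :: real
  define Q where "Q c \<tau> = (\<integral>\<omega>. g0 c (X \<tau> \<omega> / sqrt \<tau>) \<partial>M)" for c \<tau>
  define G where "G c = (\<integral>x. g0 c (\<sigma> * x) \<partial>std_normal_distribution)" for c
  have QG: "((\<lambda>\<tau>. Q c \<tau>) \<longlongrightarrow> G c) (at_right 0)" if c: "c > 0" for c
  proof (rule tendsto_at_right_sequentially[of 0 1])
    fix S :: "nat \<Rightarrow> real"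
    assume S: "\<And>n. 0 < S n" "\<And>n. S n < 1" "decseq S" "S \<longlonglongrightarrow> 0"
    have wc: "weak_conv_m (\<lambda>n. distr M borel (\<lambda>\<omega>. X (S n) \<omega> / (\<sigma> * sqrt (S n)))) std_normal_distribution"
      by (rule weak_conv_levy[OF levy \<sigma>_pos]) (use S in auto)
    have rd': "real_distribution (distr M borel (\<lambda>\<omega>. X (S n) \<omega> / (\<sigma> * sqrt (S n))))" for n
      using Xm[of "S n"] S(1)[of n] by (intro P.real_distribution_distr) auto
    have "(\<lambda>n. integral\<^sup>L (distr M borel (\<lambda>\<omega>. X (S n) \<omega> / (\<sigma> * sqrt (S n)))) (\<lambda>x. g0 c (\<sigma> * x)))
        \<longlonglongrightarrow> integral\<^sup>L std_normal_distribution (\<lambda>x. g0 c (\<sigma> * x))"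
      by (rule weak_conv_imp_integral_bdd_continuous_conv[OF rd' real_dist_normal_dist wc, where B="3*c"])
         (use c in \<open>auto simp: g0_def intro!: continuous_intros\<close>)
    moreover have "integral\<^sup>L (distr M borel (\<lambda>\<omega>. X (S n) \<omega> / (\<sigma> * sqrt (S n)))) (\<lambda>x. g0 c (\<sigma> * x)) = Q c (S n)" for n
    proof -
      have "integral\<^sup>L (distr M borel (\<lambda>\<omega>. X (S n) \<omega> / (\<sigma> * sqrt (S n)))) (\<lambda>x. g0 c (\<sigma> * x))
          = (\<integral>\<omega>. g0 c (\<sigma> * (X (S n) \<omega> / (\<sigma> * sqrt (S n)))) \<partial>M)"
        using Xm[of "S n"] S(1)[of n] by (subst integral_distr) (auto simp: g0_def)
      also have "\<dots> = Q c (S n)" unfolding Q_def using \<sigma>_pos by simp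
      finally show ?thesis .
    qed
    ultimately show "(\<lambda>n. Q c (S n)) \<longlonglongrightarrow> G c" unfolding G_def by simp
  qed simp
  have GC: "c < G c" if "c > 0" for c
    unfolding G_def g0_def using gauss_G[OF that \<sigma>_pos] by simp
  have main: "eventually (\<lambda>\<tau>. c \<le> (K / put_boundary M X r \<delta> K T (T - \<tau>) - 1) / sqrt \<tau>) (at_right 0)"
    if c: "c > 0" for c
  proof -
    define \<epsilon> where "\<epsilon> = (G c - c) / 2"
    have e: "\<epsilon> > 0" using GC[OF c] by (simp add: \<epsilon>_def)
    obtain t0 where t0: "t0 > 0" and key: "\<And>t y. 0 < t \<Longrightarrow> t < t0 \<Longrightarrow>
        t * (min (3*c) (max 0 (c - y)) - \<epsilon>) \<le> max 0 (1 - (1 - c*t) * exp ((r - \<delta>)*t\<^sup>2 + t*y))"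
      using key_ineq[OF c e, of "r - \<delta>"] by blast
    define t1 where "t1 = min (t0\<^sup>2) (1 / (4*c\<^sup>2))"
    have t1: "t1 > 0" using t0 c by (simp add: t1_def)
    have ev1: "eventually (\<lambda>\<tau>. 0 < \<tau> \<and> \<tau> < t1) (at_right (0::real))"
      using t1 by (subst eventually_at_right[of 0 1]) (auto intro!: exI[of _ t1])
    have "((\<lambda>\<tau>. exp (-r*\<tau>) * (Q c \<tau> - \<epsilon>)) \<longlongrightarrow> exp (-r*0) * (G c - \<epsilon>)) (at_right 0)"
      by (intro tendsto_intros QG c)
    moreover have "exp (-r*0) * (G c - \<epsilon>) > c" using GC[OF c] by (simp add: \<epsilon>_def field_simps)
    ultimately have ev2: "eventually (\<lambda>\<tau>. exp (-r*\<tau>) * (Q c \<tau> - \<epsilon>) > c) (at_right 0)"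
      by (rule order_tendstoD(1))
    show ?thesis using ev1 ev2
    proof eventually_elim
      case (elim \<tau>)
      hence tau: "0 < \<tau>" "\<tau> < t1" and E: "exp (-r*\<tau>) * (Q c \<tau> - \<epsilon>) > c" by auto
      define t where "t = sqrt \<tau>"
      have tp: "t > 0" using tau by (simp add: t_def)
      have tt: "t\<^sup>2 = \<tau>" using tau by (simp add: t_def)
      have "t\<^sup>2 < t0\<^sup>2" using tt tau by (simp add: t1_def)
      hence tlt0: "t < t0" using t0 tp by (simp add: power_less_imp_less_base)
      have "t\<^sup>2 < (1/(2*c))\<^sup>2" using tt tau c by (simp add: t1_def power_divide power_mult_distrib)
      hence "t < 1/(2*c)" using c tp by (simp add: power_less_imp_less_base)
      hence ct: "c * t < 1/2" using c by (simp add: field_simps)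
      have Xtm: "X \<tau> \<in> borel_measurable M" using Xm tau by simp
      define s where "s = K * (1 - c*t)"
      have s0: "s > 0" using ct K by (simp add: s_def)
      define Set where "Set = {s. 0 \<le> s \<and> put_price M X r \<delta> K T (T - \<tau>) s > max 0 (K - s)}"
      have pp: "put_price M X r \<delta> K T (T - \<tau>) s' =
          (\<integral>\<omega>. exp (- r * \<tau>) * max 0 (K - s' * exp ((r - \<delta>) * \<tau> + X \<tau> \<omega>)) \<partial>M)" for s'
        unfolding put_price_def by simp
      have pint: "integrable M (\<lambda>\<omega>. exp (- r * \<tau>) * max 0 (K - s' * exp ((r - \<delta>) * \<tau> + X \<tau> \<omega>)))"
        if "s' \<ge> 0" for s'
      proof (rule P.integrable_const_bound[where B="exp (-r*\<tau>) * K"])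
        show "AE x in M. norm (exp (- r * \<tau>) * max 0 (K - s' * exp ((r - \<delta>) * \<tau> + X \<tau> x))) \<le> exp (-r*\<tau>) * K"
          using that K by (auto simp: abs_mult intro!: mult_left_mono)
        show "(\<lambda>\<omega>. exp (- r * \<tau>) * max 0 (K - s' * exp ((r - \<delta>) * \<tau> + X \<tau> \<omega>))) \<in> borel_measurable M"
          using Xtm by measurable
      qed
      have upper: "put_price M X r \<delta> K T (T - \<tau>) s' \<le> exp (-r*\<tau>) * K" if "s' \<ge> 0" for s'
      proof -
        have "put_price M X r \<delta> K T (T - \<tau>) s' \<le> (\<integral>\<omega>. exp (-r*\<tau>) * K \<partial>M)"
          unfolding pp by (rule integral_mono[OF pint[OF that]]) (use that K in \<open>auto intro!: mult_left_mono\<close>)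
        thus ?thesis by (simp add: P.prob_space)
      qed
      have gint: "integrable M (\<lambda>\<omega>. g0 c (X \<tau> \<omega> / t))"
        by (rule P.integrable_const_bound[where B="3*c"]) (use c Xtm in \<open>auto simp: g0_def\<close>)
      have lower: "exp (-r*\<tau>) * K * (t * (Q c \<tau> - \<epsilon>)) \<le> put_price M X r \<delta> K T (T - \<tau>) s"
      proof -
        have "(\<integral>\<omega>. exp (-r*\<tau>) * K * t * g0 c (X \<tau> \<omega> / t) - exp (-r*\<tau>) * K * t * \<epsilon> \<partial>M)
            \<le> put_price M X r \<delta> K T (T - \<tau>) s"
          unfolding pp
        proof (rule integral_mono)
          show "integrable M (\<lambda>\<omega>. exp (-r*\<tau>) * K * t * g0 c (X \<tau> \<omega> / t) - exp (-r*\<tau>) * K * t * \<epsilon>)"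
            using gint by simp
          show "integrable M (\<lambda>\<omega>. exp (- r * \<tau>) * max 0 (K - s * exp ((r - \<delta>) * \<tau> + X \<tau> \<omega>)))"
            using pint s0 by simp
          fix \<omega>
          have k: "t * (g0 c (X \<tau> \<omega> / t) - \<epsilon>) \<le> max 0 (1 - (1 - c*t) * exp ((r - \<delta>)*t\<^sup>2 + t*(X \<tau> \<omega> / t)))"
            using key[OF tp tlt0] unfolding g0_def .
          have "t*(X \<tau> \<omega> / t) = X \<tau> \<omega>" using tp by simp
          hence k': "t * (g0 c (X \<tau> \<omega> / t) - \<epsilon>) \<le> max 0 (1 - (1 - c*t) * exp ((r - \<delta>)*\<tau> + X \<tau> \<omega>))"
            using k tt by simp
          have "K * max 0 (1 - (1 - c*t) * exp ((r - \<delta>)*\<tau> + X \<tau> \<omega>)) = max 0 (K - s * exp ((r - \<delta>) * \<tau> + X \<tau> \<omega>))"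
            using K unfolding s_def by (simp add: max_mult_distrib_left algebra_simps)
          hence "K * (t * (g0 c (X \<tau> \<omega> / t) - \<epsilon>)) \<le> max 0 (K - s * exp ((r - \<delta>) * \<tau> + X \<tau> \<omega>))"
            using mult_left_mono[OF k', of K] K by simp
          hence "exp (-r*\<tau>) * (K * (t * (g0 c (X \<tau> \<omega> / t) - \<epsilon>))) \<le> exp (-r*\<tau>) * max 0 (K - s * exp ((r - \<delta>) * \<tau> + X \<tau> \<omega>))"
            by (rule mult_left_mono) simp
          thus "exp (-r*\<tau>) * K * t * g0 c (X \<tau> \<omega> / t) - exp (-r*\<tau>) * K * t * \<epsilon> \<le> exp (- r * \<tau>) * max 0 (K - s * exp ((r - \<delta>) * \<tau> + X \<tau> \<omega>))"
            by (simp add: algebra_simps)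
        qed
        moreover have "(\<integral>\<omega>. exp (-r*\<tau>) * K * t * g0 c (X \<tau> \<omega> / t) - exp (-r*\<tau>) * K * t * \<epsilon> \<partial>M)
            = exp (-r*\<tau>) * K * (t * (Q c \<tau> - \<epsilon>))"
          using gint P.prob_space unfolding Q_def t_def by (simp add: algebra_simps)
        ultimately show ?thesis by simp
      qed
      have "K * t * c < exp (-r*\<tau>) * K * (t * (Q c \<tau> - \<epsilon>))"
      proof -
        have "K * t * c < K * t * (exp (-r*\<tau>) * (Q c \<tau> - \<epsilon>))"
          using E K tp by simp
        thus ?thesis by (simp add: algebra_simps)
      qed
      hence lt: "K * t * c < put_price M X r \<delta> K T (T - \<tau>) s" using lower by linarith
      have "K - s = K * t * c" unfolding s_def by (simp add: algebra_simps)
      moreover have "K * t * c > 0" using K tp c by simp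
      ultimately have "max 0 (K - s) = K * t * c" by simp
      hence "max 0 (K - s) < put_price M X r \<delta> K T (T - \<tau>) s" using lt by simp
      hence sin: "s \<in> Set" using s0 unfolding Set_def by simp
      have bdd: "bdd_below Set" unfolding Set_def by (rule bdd_belowI[of _ 0]) auto
      have le_s: "put_boundary M X r \<delta> K T (T - \<tau>) \<le> s"
        unfolding put_boundary_def Set_def[symmetric] by (rule cInf_lower[OF sin bdd])
      have lbS: "K * (1 - exp (-r*\<tau>)) \<le> s'" if "s' \<in> Set" for s'
      proof -
        have "max 0 (K - s') < exp (-r*\<tau>) * K" using that upper[of s'] unfolding Set_def by auto
        thus ?thesis by (simp add: algebra_simps)
      qed
      have ge: "K * (1 - exp (-r*\<tau>)) \<le> put_boundary M X r \<delta> K T (T - \<tau>)"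
        unfolding put_boundary_def Set_def[symmetric] by (rule cInf_greatest) (use sin lbS in auto)
      have bpos: "put_boundary M X r \<delta> K T (T - \<tau>) > 0"
      proof -
        have "exp (-r*\<tau>) < 1" using rpos tau by simp
        hence "K * (1 - exp (-r*\<tau>)) > 0" using K by simp
        thus ?thesis using ge by linarith
      qed
      have "K / s \<le> K / put_boundary M X r \<delta> K T (T - \<tau>)"
        using bpos le_s K by (intro divide_left_mono) auto
      moreover have "K / s - 1 = c * t / (1 - c*t)" using K ct unfolding s_def by (simp add: field_simps)
      moreover have "c * t \<le> c * t / (1 - c*t)"
        using c tp ct by (simp add: field_simps)
      ultimately have "c * t \<le> K / put_boundary M X r \<delta> K T (T - \<tau>) - 1" by linarith
      thus "c \<le> (K / put_boundary M X r \<delta> K T (T - \<tau>) - 1) / sqrt \<tau>"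
        using tp unfolding t_def[symmetric] by (simp add: field_simps)
    qed
  qed
  show ?thesis
    unfolding filterlim_at_top
  proof
    fix Z :: real
    have "eventually (\<lambda>\<tau>. max 1 Z \<le> (K / put_boundary M X r \<delta> K T (T - \<tau>) - 1) / sqrt \<tau>) (at_right 0)"
      by (rule main) simp
    thus "eventually (\<lambda>\<tau>. Z \<le> (K / put_boundary M X r \<delta> K T (T - \<tau>) - 1) / sqrt \<tau>) (at_right 0)"
      by eventually_elim simp
  qed
qed

end
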